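(* Let $\mathcal{X}$ be the class of finite groups $G$ in which independence and strong independence coincide, i.e. in which a finite subset $A\subseteq G$ is independent if and only if it is strongly independent. Then $\mathcal{X}$ is closed under taking subgroups, and every group in $\mathcal{X}$ is an EPPO group.
   Context: A subset $A$ of a group $G$ is \emph{independent} if $a\notin\langle A\setminus\{a\}\rangle$ for every $a\in A$. A finite subset $A$ is \emph{strongly independent} if no subgroup of $G$ containing $A$ can be generated by fewer than $|A|$ elements. An \emph{EPPO group} is a group in which every element has prime power order. *)

theory Defs
  imports "HOL-Algebra.Algebra" "HOL-Computational_Algebra.Primes"
begin

definition independent :: "('a, 'b) monoid_scheme \<Rightarrow> 'a set \<Rightarrow> bool" where
  "independent G A \<longleftrightarrow> A \<subseteq> carrier G \<and> (\<forall>a\<in>A. a \<notin> generate G (A - {a}))"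

definition strongly_independent :: "('a, 'b) monoid_scheme \<Rightarrow> 'a set \<Rightarrow> bool" where
  "strongly_independent G A \<longleftrightarrow> A \<subseteq> carrier G \<and> finite A \<and>
     (\<forall>K. subgroup K G \<and> A \<subseteq> K \<longrightarrow>
        \<not> (\<exists>B. B \<subseteq> K \<and> finite B \<and> card B < card A \<and> generate G B = K))"

definition EPPO :: "('a, 'b) monoid_scheme \<Rightarrow> bool" where
  "EPPO G \<longleftrightarrow> (\<forall>g\<in>carrier G. \<exists>p k. Factorial_Ring.prime (p::nat) \<and> group.ord G g = p ^ k)"

definition class_X :: "('a, 'b) monoid_scheme \<Rightarrow> bool" where
  "class_X G \<longleftrightarrow> group G \<and> finite (carrier G) \<and>
     (\<forall>A. A \<subseteq> carrier G \<and> finite A \<longrightarrow> (independent G A \<longleftrightarrow> strongly_independent G A))"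

end

theory Submission
  imports Defs
begin

lemma not_pp_split:
  fixes n :: nat
  assumes "n \<ge> 1" "\<not>(\<exists>p k. Factorial_Ring.prime p \<and> n = p ^ k)"
  shows "\<exists>q m. n = q * m \<and> coprime q m \<and> q > 1 \<and> m > 1"
proof -
  have "n \<noteq> 1"
  proof
    assume "n = 1" hence "n = 2 ^ 0" by simp
    thus False using assms(2) two_is_prime_nat by blast
  qed
  then obtain p where p: "Factorial_Ring.prime p" "p dvd n" using prime_factor_nat by blast
  define q where "q = p ^ multiplicity p n"
  define m where "m = n div q"
  have nq: "n = q * m" unfolding m_def q_def using multiplicity_dvd[of p n] by simp
  have "\<not> p dvd m" unfolding m_def q_def
    by (rule multiplicity_decompose) (use assms(1) p(1) not_prime_unit in auto)
  hence cp: "coprime p m" using p(1) by (simp add: prime_imp_coprime)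
  hence "coprime q m" unfolding q_def by simp
  moreover have "multiplicity p n > 0" using p assms(1)
    using prime_multiplicity_gt_zero_iff[OF prime_imp_prime_elem[OF p(1)], of n] by simp
  hence "q > 1" unfolding q_def using one_less_power[OF prime_gt_1_nat[OF p(1)]] by blast
  moreover have "m \<noteq> 0" using nq assms(1) by auto
  moreover have "m \<noteq> 1" using nq assms(2) p(1) q_def by auto
  ultimately show ?thesis using nq by (intro exI[of _ q] exI[of _ m]) auto
qed

lemma (in group) gen_pow_dvd:
  assumes g: "g \<in> carrier G" and b: "b dvd ord g"
    and h: "g [^] (a::nat) \<in> generate G {g [^] (b::nat)}"
  shows "b dvd a"
proof -
  obtain i :: int where i: "g [^] a = (g [^] b) [^] i"
    using h generate_pow[of "g [^] b"] g by auto
  have "(g [^] b) [^] i = g [^] (int b * i)"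
    using g by (metis int_pow_int int_pow_pow)
  hence "g [^] (int a) = g [^] (int b * i)" using i g by (simp add: int_pow_int)
  hence "int (ord g) dvd int b * i - int a" using int_pow_eq g by blast
  hence "int b dvd int b * i - int a" using b by (meson dvd_trans int_dvd_int_iff)
  moreover have "int b dvd int b * i" by simp
  ultimately have "int b dvd int b * i - (int b * i - int a)" using dvd_diff by blast
  hence "int b dvd int a" by simp
  thus ?thesis by simp
qed

lemma strong_imp_indep:
  assumes "group G" "strongly_independent G A"
  shows "independent G A"
  unfolding independent_def
proof (intro conjI ballI)
  show "A \<subseteq> carrier G" using assms(2) unfolding strongly_independent_def by auto
  fix a assume a: "a \<in> A"
  show "a \<notin> generate G (A - {a})"
  proof
    assume ag: "a \<in> generate G (A - {a})"
    have AG: "A \<subseteq> carrier G" "finite A" using assms(2) unfolding strongly_independent_def by auto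
    have sub: "A - {a} \<subseteq> carrier G" using AG by blast
    have AA: "A \<subseteq> generate G (A - {a})"
    proof
      fix x assume x: "x \<in> A"
      show "x \<in> generate G (A - {a})"
      proof (cases "x = a")
        case True thus ?thesis using ag by simp
      next
        case False thus ?thesis using x generate.incl[of x "A - {a}" G] by blast
      qed
    qed
    have sg: "subgroup (generate G (A - {a})) G"
      using group.generate_is_subgroup[OF assms(1) sub] .
    have "card (A - {a}) < card A" using card_Diff1_less[OF AG(2) a] .
    moreover have "A - {a} \<subseteq> generate G (A - {a})" using generate.incl[of _ "A - {a}" G] by blast
    moreover have "finite (A - {a})" using AG by blast
    ultimately have ex: "\<exists>B. B \<subseteq> generate G (A - {a}) \<and> finite B \<and> card B < card A
        \<and> generate G B = generate G (A - {a})"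
      by (intro exI[of _ "A - {a}"]) simp
    have "\<forall>K. subgroup K G \<and> A \<subseteq> K \<longrightarrow>
        \<not> (\<exists>B. B \<subseteq> K \<and> finite B \<and> card B < card A \<and> generate G B = K)"
      using assms(2) unfolding strongly_independent_def by blast
    thus False using sg AA ex by blast
  qed
qed

lemma (in group) part1_lem:
  assumes fin: "finite (carrier G)"
    and eq: "\<forall>A. A \<subseteq> carrier G \<and> finite A \<longrightarrow> (independent G A \<longleftrightarrow> strongly_independent G A)"
  shows "\<forall>H. subgroup H G \<longrightarrow> class_X (G\<lparr>carrier := H\<rparr>)"
  proof (intro allI impI)
    fix H assume H: "subgroup H G"
    let ?G' = "G\<lparr>carrier := H\<rparr>"
    have g': "group ?G'" using subgroup.subgroup_is_group[OF H is_group] .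
    have HG: "H \<subseteq> carrier G" using subgroup.subset[OF H] .
    have f': "finite (carrier ?G')" using fin HG finite_subset by auto
    show "class_X ?G'" unfolding class_X_def
    proof (intro conjI g' f' allI impI)
      fix A assume A: "A \<subseteq> carrier ?G' \<and> finite A"
      hence AH: "A \<subseteq> H" "finite A" by auto
      show "independent ?G' A \<longleftrightarrow> strongly_independent ?G' A"
      proof
        assume ind: "independent ?G' A"
        have "independent G A" unfolding independent_def
        proof (intro conjI ballI)
          show "A \<subseteq> carrier G" using AH HG by blast
          fix a assume a: "a \<in> A"
          have "generate ?G' (A - {a}) = generate G (A - {a})"
            using generate_consistent[OF _ H] AH by blast
          moreover have "a \<notin> generate ?G' (A - {a})" using ind a unfolding independent_def by blast
          ultimately show "a \<notin> generate G (A - {a})" by simp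
        qed
        hence si: "strongly_independent G A" using eq AH HG by blast
        show "strongly_independent ?G' A" unfolding strongly_independent_def
        proof (intro conjI allI impI)
          show "A \<subseteq> carrier ?G'" "finite A" using AH by auto
          fix K assume K: "subgroup K ?G' \<and> A \<subseteq> K"
          have KH: "K \<subseteq> H" using subgroup.subset[OF conjunct1[OF K]] by simp
          have "group (?G'\<lparr>carrier := K\<rparr>)" using subgroup.subgroup_is_group[OF conjunct1[OF K] g'] .
          hence "group (G\<lparr>carrier := K\<rparr>)" by simp
          hence KG: "subgroup K G" using group_incl_imp_subgroup KH HG by blast
          have nb: "\<not> (\<exists>B. B \<subseteq> K \<and> finite B \<and> card B < card A \<and> generate G B = K)"
            using si KG K unfolding strongly_independent_def by blast
          show "\<not> (\<exists>B. B \<subseteq> K \<and> finite B \<and> card B < card A \<and> generate ?G' B = K)"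
          proof
            assume "\<exists>B. B \<subseteq> K \<and> finite B \<and> card B < card A \<and> generate ?G' B = K"
            then obtain B where B: "B \<subseteq> K" "finite B" "card B < card A" "generate ?G' B = K" by blast
            have "generate ?G' B = generate G B" using generate_consistent[OF _ H] B(1) KH by blast
            thus False using nb B by blast
          qed
        qed
      next
        assume "strongly_independent ?G' A" thus "independent ?G' A" using strong_imp_indep g' by blast
      qed
    qed
  qed

lemma (in group) eppo_lem:
  assumes fin: "finite (carrier G)"
    and eq: "\<forall>A. A \<subseteq> carrier G \<and> finite A \<longrightarrow> (independent G A \<longleftrightarrow> strongly_independent G A)"
  shows "EPPO G" unfolding EPPO_def
  proof
    fix g assume g: "g \<in> carrier G"
    show "\<exists>p k. Factorial_Ring.prime (p::nat) \<and> group.ord G g = p ^ k"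
    proof (rule ccontr)
      assume np: "\<not> (\<exists>p k. Factorial_Ring.prime (p::nat) \<and> group.ord G g = p ^ k)"
      have "ord g \<ge> 1" using ord_ge_1[OF fin g] .
      then obtain q m where qm: "ord g = q * m" "coprime q m" "q > 1" "m > 1"
        using not_pp_split[OF \<open>ord g \<ge> 1\<close>] np by metis
      define x where "x = g [^] q"
      define y where "y = g [^] m"
      have xc: "x \<in> carrier G" and yc: "y \<in> carrier G" using g x_def y_def by auto
      have qd: "q dvd ord g" and md: "m dvd ord g" using qm by auto
      have xny: "x \<notin> generate G {y}"
      proof
        assume "x \<in> generate G {y}"
        hence "g [^] q \<in> generate G {g [^] m}" by (simp only: x_def y_def)
        hence "m dvd q" by (rule gen_pow_dvd[OF g md])
        hence "is_unit m" using coprime_common_divisor[OF qm(2)] dvd_refl by metis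
        thus False using qm(4) by simp
      qed
      have ynx: "y \<notin> generate G {x}"
      proof
        assume "y \<in> generate G {x}"
        hence "g [^] m \<in> generate G {g [^] q}" by (simp only: x_def y_def)
        hence "q dvd m" by (rule gen_pow_dvd[OF g qd])
        hence "is_unit q" using coprime_common_divisor[OF qm(2)] dvd_refl by metis
        thus False using qm(3) by simp
      qed
      have neq: "x \<noteq> y" using xny generate.incl[of y "{y}" G] by blast
      have e1: "{x, y} - {x} = {y}" using neq by blast
      have e2: "{x, y} - {y} = {x}" using neq by blast
      have ind: "independent G {x, y}" unfolding independent_def
        using xc yc xny ynx e1 e2 by auto
      have "{x, y} \<subseteq> carrier G \<and> finite {x, y}" using xc yc by blast
      hence si: "strongly_independent G {x, y}" using eq[rule_format, of "{x, y}"] ind by blast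
      have gen: "generate G {g} = { g [^] (k :: int) | k. k \<in> UNIV }" using generate_pow[OF g] .
      have "x = g [^] (int q)" using x_def g by (simp add: int_pow_int)
      hence xg: "x \<in> generate G {g}" using gen by blast
      have "y = g [^] (int m)" using y_def g by (simp add: int_pow_int)
      hence yg: "y \<in> generate G {g}" using gen by blast
      have sg: "subgroup (generate G {g}) G" using generate_is_subgroup[of "{g}"] g by simp
      have "card {x, y} = 2" using neq by simp
      hence "{g} \<subseteq> generate G {g} \<and> finite {g} \<and> card {g} < card {x, y} \<and> generate G {g} = generate G {g}"
        using generate.incl[of g "{g}" G] by simp
      hence ex: "\<exists>B. B \<subseteq> generate G {g} \<and> finite B \<and> card B < card {x, y} \<and> generate G B = generate G {g}"
        by blast
      have "\<forall>K. subgroup K G \<and> {x, y} \<subseteq> K \<longrightarrow>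
        \<not> (\<exists>B. B \<subseteq> K \<and> finite B \<and> card B < card {x, y} \<and> generate G B = K)"
        using si unfolding strongly_independent_def by blast
      moreover have "{x, y} \<subseteq> generate G {g}" using xg yg by blast
      ultimately show False using sg ex by blast
    qed
  qed

theorem mainTheorem3:
  fixes G :: "('a, 'b) monoid_scheme"
  assumes "class_X G"
  shows "(\<forall>H. subgroup H G \<longrightarrow> class_X (G\<lparr>carrier := H\<rparr>)) \<and> EPPO G"
proof -
  have grp: "group G" and fin: "finite (carrier G)"
    and eq: "\<forall>A. A \<subseteq> carrier G \<and> finite A \<longrightarrow> (independent G A \<longleftrightarrow> strongly_independent G A)"
    using assms unfolding class_X_def by blast+
  show ?thesis using group.part1_lem[OF grp fin eq] group.eppo_lem[OF grp fin eq] by blast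
qed

end
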